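(* Let $\varepsilon>0$, $a>0$, $u>0$, $F=(u,0)\in\mathbb{R}^2$, and $\eta_\varepsilon(x)=(4\pi\varepsilon)^{-1}\exp(-|x|^2/(4\varepsilon))$ for $x\in\mathbb{R}^2$. Let $(X_\varepsilon,c_\varepsilon)$, $X_\varepsilon=(X_\varepsilon^{(1)},X_\varepsilon^{(2)})$, be the solution of $$\partial_t X_\varepsilon=\nabla c_\varepsilon(X_\varepsilon(t),t)+F,\qquad \partial_t c_\varepsilon-\Delta c_\varepsilon=a\,\eta_\varepsilon(x-X_\varepsilon(t))\quad\text{in }\mathbb{R}^2,\ t>0,$$ with $X_\varepsilon(0)=(x^0,y^0)\in\mathbb{R}^2$ and $c_\varepsilon(0)=0$. Assume (i) $t\mapsto\partial_tX_\varepsilon^{(1)}(t)$ is nonincreasing for all sufficiently large $t>0$; (ii) there exists $v_\varepsilon>0$ such that $\partial_t X_\varepsilon(t)\to(v_\varepsilon,0)$ as $t\to\infty$; (iii) $v_\varepsilon$ is bounded for all $\varepsilon\in(0,1)$. Then $v_\varepsilon\to0$ as $\varepsilon\to0$.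
   Context: $c_\varepsilon$ is the Duhamel (heat-kernel) solution of the heat equation with the given source; the assumptions are made for each $\varepsilon\in(0,1)$. *)

theory Defs
  imports "HOL-Analysis.Analysis"
begin

definition heat_kernel :: "real \<times> real \<Rightarrow> real \<Rightarrow> real" where
  "heat_kernel x t = exp (- ((norm x)^2) / (4 * t)) / (4 * pi * t)"

definition eta :: "real \<Rightarrow> real \<times> real \<Rightarrow> real" where
  "eta \<epsilon> x = exp (- ((norm x)^2) / (4 * \<epsilon>)) / (4 * pi * \<epsilon>)"

text \<open>Duhamel solution of  c_t - Laplace c = a eta_eps(x - X(t)),  c(0) = 0.\<close>
definition duhamel_c :: "real \<Rightarrow> real \<Rightarrow> (real \<Rightarrow> real \<times> real) \<Rightarrow> real \<times> real \<Rightarrow> real \<Rightarrow> real" where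
  "duhamel_c a \<epsilon> X x t =
     (LINT s:{0..t}|lborel. (LINT y|lborel. heat_kernel (x - y) (t - s) * (a * eta \<epsilon> (y - X s))))"

end

theory Submission
  imports Defs "HOL-Probability.Probability"
begin

definition nd :: "real \<Rightarrow> real \<Rightarrow> real" where
  "nd sg z = normal_density 0 (sqrt (2 * sg)) z"

lemma nd_nonneg[simp]: "nd sg z \<ge> 0"
  by (simp add: nd_def)

lemma nd_eq: "sg > 0 \<Longrightarrow> nd sg z = exp (- (z ^ 2) / (4 * sg)) / sqrt (4 * pi * sg)"
  by (simp add: nd_def normal_density_def field_simps)

lemma heat_split: "sg > 0 \<Longrightarrow> heat_kernel w sg = nd sg (fst w) * nd sg (snd w)"
proof -
  assume sg: "sg > 0"
  obtain w1 w2 where w: "w = (w1, w2)" by fastforce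
  have n: "(norm w)^2 = w1^2 + w2^2" unfolding w norm_Pair by simp
  have "sqrt (4 * pi * sg) * sqrt (4 * pi * sg) = 4 * pi * sg" using sg by simp
  moreover have h: "heat_kernel w sg = exp (- (w1 ^ 2 + w2 ^ 2) / (4 * sg)) / (4 * pi * sg)"
    unfolding heat_kernel_def n ..
  moreover have "exp (- (w1 ^ 2 + w2 ^ 2) / (4 * sg)) = exp (- (w1 ^ 2) / (4 * sg)) * exp (- (w2 ^ 2) / (4 * sg))"
    using sg by (simp add: field_simps flip: exp_add)
  ultimately show ?thesis using sg
    by (simp add: nd_eq w)
qed

lemma eta_split: "sg > 0 \<Longrightarrow> eta sg w = heat_kernel w sg"
  by (simp add: eta_def heat_kernel_def)

lemma conv1:
  assumes sg: "sg > 0" and e: "e > 0"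
  shows "(\<integral>\<^sup>+y. ennreal (nd sg (x - y) * nd e (y - p)) \<partial>lborel) = ennreal (nd (sg + e) (x - p))"
proof -
  have "(\<integral>\<^sup>+y. ennreal (nd sg (x - y) * nd e (y - p)) \<partial>lborel)
      = (\<integral>\<^sup>+y. ennreal (nd sg (x - (p + 1*y)) * nd e ((p + 1*y) - p)) \<partial>lborel)"
    using nn_integral_real_affine[of "\<lambda>y. ennreal (nd sg (x - y) * nd e (y - p))" 1 p]
    by (simp add: nd_def)
  also have "\<dots> = (\<integral>\<^sup>+y. ennreal (normal_density 0 (sqrt (2 * sg)) ((x - p) - y) * normal_density 0 (sqrt (2 * e)) y) \<partial>lborel)"
    by (simp add: nd_def algebra_simps)
  also have "\<dots> = ennreal (normal_density 0 (sqrt ((sqrt (2 * sg))\<^sup>2 + (sqrt (2 * e))\<^sup>2)) (x - p))"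
    using conv_normal_density_zero_mean[of "sqrt (2 * sg)" "sqrt (2 * e)"] sg e by (auto dest: fun_cong)
  also have "\<dots> = ennreal (nd (sg + e) (x - p))"
    using sg e by (simp add: nd_def algebra_simps)
  finally show ?thesis .
qed

lemma nn_prod_split:
  fixes f g :: "real \<Rightarrow> real"
  assumes [measurable]: "f \<in> borel_measurable borel" "g \<in> borel_measurable borel"
    and "\<And>y. f y \<ge> 0" "\<And>y. g y \<ge> 0"
  shows "(\<integral>\<^sup>+y. ennreal (f (fst y) * g (snd y)) \<partial>(lborel :: (real \<times> real) measure))
     = (\<integral>\<^sup>+y. ennreal (f y) \<partial>lborel) * (\<integral>\<^sup>+y. ennreal (g y) \<partial>lborel)"
proof -
  have "(\<integral>\<^sup>+y. ennreal (f (fst y) * g (snd y)) \<partial>(lborel :: (real \<times> real) measure))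
      = (\<integral>\<^sup>+y. ennreal (f (fst y) * g (snd y)) \<partial>(lborel \<Otimes>\<^sub>M lborel))"
    by (simp add: lborel_prod)
  also have "\<dots> = (\<integral>\<^sup>+y1. \<integral>\<^sup>+y2. ennreal (f y1 * g y2) \<partial>lborel \<partial>lborel)"
    by (subst lborel.nn_integral_fst[symmetric]) auto
  also have "\<dots> = (\<integral>\<^sup>+y1. ennreal (f y1) * \<integral>\<^sup>+y2. ennreal (g y2) \<partial>lborel \<partial>lborel)"
    using assms(3,4) by (simp add: ennreal_mult nn_integral_cmult)
  also have "\<dots> = (\<integral>\<^sup>+y. ennreal (f y) \<partial>lborel) * (\<integral>\<^sup>+y. ennreal (g y) \<partial>lborel)"
    by (simp add: nn_integral_multc)
  finally show ?thesis .
qed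

lemma heat_conv:
  assumes sg: "sg > 0" and e: "e > 0"
  shows "(LINT y|lborel. heat_kernel (x - y) sg * (a * eta e (y - p))) = a * heat_kernel (x - p) (sg + e)"
proof -
  have eq: "heat_kernel (x - y) sg * eta e (y - p) =
     (nd sg (fst x - fst y) * nd e (fst y - fst p)) * (nd sg (snd x - snd y) * nd e (snd y - snd p))" for y
    using sg e by (simp add: heat_split eta_split)
  have m1: "(\<lambda>y. nd sg (fst x - y) * nd e (y - fst p)) \<in> borel_measurable borel"
    by (simp add: nd_def)
  have m2: "(\<lambda>y. nd sg (snd x - y) * nd e (y - snd p)) \<in> borel_measurable borel"
    by (simp add: nd_def)
  have "(LINT y|lborel. heat_kernel (x - y) sg * eta e (y - p))
      = enn2real (\<integral>\<^sup>+y. ennreal (heat_kernel (x - y) sg * eta e (y - p)) \<partial>lborel)"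
    apply (rule integral_eq_nn_integral)
     prefer 2 apply (simp add: eq nd_def)
     apply (simp only: measurable_lborel2)
     apply (rule borel_measurable_continuous_onI)
     apply (unfold heat_kernel_def eta_def)
     apply (intro continuous_intros)
    using sg e by auto
  also have "\<dots> = enn2real ((\<integral>\<^sup>+y. ennreal (nd sg (fst x - y) * nd e (y - fst p)) \<partial>lborel) *
       (\<integral>\<^sup>+y. ennreal (nd sg (snd x - y) * nd e (y - snd p)) \<partial>lborel))"
    unfolding eq by (subst nn_prod_split[OF m1 m2]) (auto simp: nd_def)
  also have "\<dots> = nd (sg + e) (fst x - fst p) * nd (sg + e) (snd x - snd p)"
    using sg e by (simp add: conv1 enn2real_mult)
  also have "\<dots> = heat_kernel (x - p) (sg + e)"
    using sg e by (simp add: heat_split)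
  finally have "(LINT y|lborel. heat_kernel (x - y) sg * eta e (y - p)) = heat_kernel (x - p) (sg + e)" .
  moreover have "(LINT y|lborel. heat_kernel (x - y) sg * (a * eta e (y - p)))
     = a * (LINT y|lborel. heat_kernel (x - y) sg * eta e (y - p))"
    by (simp add: mult.left_commute[of _ a] integral_mult_right_zero)
  ultimately show ?thesis by simp
qed

lemma K_cont:
  assumes e: "e > 0" and X: "continuous_on {0..t} X"
  shows "continuous_on {0..t} (\<lambda>s. a * heat_kernel (x - X s) (e + t - s))"
  unfolding heat_kernel_def
  apply (intro continuous_intros X)
  using e by auto

lemma duhamel_eq:
  assumes e: "e > 0" and t: "t > 0" and X: "continuous_on {0..t} X"
  shows "duhamel_c a e X x t = integral {0..t} (\<lambda>s. a * heat_kernel (x - X s) (e + t - s))"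
proof -
  define K where "K s = a * heat_kernel (x - X s) (e + t - s)" for s
  have si: "set_integrable lborel {0..t} K"
    unfolding K_def by (rule borel_integrable_atLeastAtMost'[OF K_cont[OF e X]])
  have si2: "set_integrable lborel {0..<t} K"
    by (rule set_integrable_subset[OF si]) auto
  have inner: "indicator {0..t} s *\<^sub>R (LINT y|lborel. heat_kernel (x - y) (t - s) * (a * eta e (y - X s)))
      = indicator {0..<t} s *\<^sub>R K s" for s
  proof (cases "s \<in> {0..<t}")
    case True
    then show ?thesis using heat_conv[of "t - s" e x a "X s"] e
      by (simp add: K_def algebra_simps)
  next
    case False
    then show ?thesis by (cases "s = t") (auto simp: heat_kernel_def indicator_def)
  qed
  have "duhamel_c a e X x t = (LINT s:{0..<t}|lborel. K s)"
    unfolding duhamel_c_def set_lebesgue_integral_def inner ..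
  also have "\<dots> = (LINT s:{0..t}|lborel. K s)"
  proof (rule set_integral_cong_set)
    show "set_borel_measurable lborel {0..t} K" using si
      by (simp add: set_borel_measurable_def set_integrable_def borel_measurable_integrable)
    show "set_borel_measurable lborel {0..<t} K" using si2
      by (simp add: set_borel_measurable_def set_integrable_def borel_measurable_integrable)
    show "AE s in lborel. (s \<in> {0..t}) = (s \<in> {0..<t})"
      using AE_lborel_singleton[of t] by eventually_elim auto
  qed
  also have "\<dots> = integral {0..t} K"
    by (rule set_borel_integral_eq_integral(2)[OF si])
  finally show ?thesis unfolding K_def .
qed

lemma abs_fst_le: "\<bar>fst (p :: real \<times> real)\<bar> \<le> norm p"
proof -
  have "norm p = sqrt ((fst p)^2 + (snd p)^2)" by (cases p) (simp add: norm_Pair)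
  also have "\<dots> \<ge> sqrt ((fst p)^2)" by (intro real_sqrt_le_mono) simp
  finally show ?thesis by simp
qed

lemma norm_v0: "norm ((v::real), (0::real)) = \<bar>v\<bar>"
  by (simp add: norm_Pair)

lemma hk_diff:
  assumes tau: "tau > 0" and h: "h > 0"
  shows "heat_kernel (z + (h, 0)) tau - heat_kernel z tau
     \<le> - heat_kernel (z + (h, 0)) tau * (h * (2 * fst z + h)) / (4 * tau)"
proof -
  obtain z1 z2 where z: "z = (z1, z2)" by fastforce
  define P where "P = (z1 ^ 2 + z2 ^ 2) / (4 * tau)"
  define A where "A = h * (2 * z1 + h) / (4 * tau)"
  have n1: "(norm z)^2 = z1 ^ 2 + z2 ^ 2" unfolding z norm_Pair by simp
  have n2': "(norm (z + (h, 0)))^2 = (z1 + h) ^ 2 + z2 ^ 2"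
    unfolding z by (simp add: norm_Pair)
  have n2: "(norm (z + (h, 0)))^2 = z1 ^ 2 + z2 ^ 2 + h * (2 * z1 + h)"
    unfolding n2' by (simp add: power2_eq_square algebra_simps)
  have H1: "heat_kernel (z + (h, 0)) tau = exp (- (P + A)) / (4 * pi * tau)"
    unfolding heat_kernel_def n2 P_def A_def using tau by (simp add: field_simps)
  have H0: "heat_kernel z tau = exp (- P) / (4 * pi * tau)"
    unfolding heat_kernel_def n1 P_def using tau by (simp add: field_simps)
  have "exp (- P) = exp (- (P + A)) * exp A" by (simp flip: exp_add)
  also have "\<dots> \<ge> exp (- (P + A)) * (1 + A)"
    by (intro mult_left_mono exp_ge_add_one_self) simp
  finally have "exp (- P) \<ge> exp (- (P + A)) * (1 + A)" .
  then have "exp (- (P + A)) - exp (- P) \<le> - exp (- (P + A)) * A" by (simp add: algebra_simps)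
  then have "(exp (- (P + A)) - exp (- P)) / (4 * pi * tau) \<le> (- exp (- (P + A)) * A) / (4 * pi * tau)"
    using tau by (intro divide_right_mono) auto
  moreover have "- (exp (- (P + A)) / (4 * pi * tau)) * (h * (2 * fst z + h)) / (4 * tau)
      = (- exp (- (P + A)) * A) / (4 * pi * tau)"
    by (simp add: A_def z)
  ultimately show ?thesis unfolding H1 H0 by (simp add: diff_divide_distrib)
qed

lemma lin_bound:
  fixes X X' :: "real \<Rightarrow> real \<times> real"
  assumes der: "\<And>s. s \<ge> T \<Longrightarrow> (X has_vector_derivative X' s) (at s)"
    and close: "\<And>s. s \<ge> T \<Longrightarrow> norm (X' s - (v, 0)) \<le> d"
    and v: "v \<ge> 0" and ab: "T \<le> a" "a \<le> b"
  shows "fst (X b - X a) \<ge> (b - a) * (v - 3 * d)" and "norm (X b - X a) \<le> (b - a) * (v + 3 * d)"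
proof -
  have N: "norm (X b - X a - (b - a) *\<^sub>R X' a) \<le> norm (b - a) * (2 * d)"
  proof (rule vector_differentiable_bound_linearization[where S="{a..b}"])
    show "(X has_vector_derivative X' x) (at x within {a..b})" if "x \<in> {a..b}" for x
      using der[of x] that ab by (auto intro: has_vector_derivative_at_within)
    show "closed_segment a b \<subseteq> {a..b}" using ab by (simp add: closed_segment_eq_real_ivl)
    show "norm (X' x - X' a) \<le> 2 * d" if "x \<in> {a..b}" for x
    proof -
      have "norm (X' x - X' a) \<le> norm (X' x - (v,0)) + norm (X' a - (v,0))"
        using norm_triangle_ineq4[of "X' x - (v,0)" "X' a - (v,0)"] by simp
      also have "\<dots> \<le> 2 * d" using close[of x] close[of a] that ab by auto
      finally show ?thesis .
    qed
    show "a \<in> {a..b}" using ab by simp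
  qed
  define R where "R = X b - X a - (b - a) *\<^sub>R X' a"
  define E where "E = X' a - (v, 0)"
  have E: "norm E \<le> d" using close[of a] ab by (simp add: E_def)
  have R: "norm R \<le> (b - a) * (2 * d)" using N ab by (simp add: R_def)
  have eq: "X b - X a = R + (b - a) *\<^sub>R ((v, 0) + E)" by (simp add: R_def E_def)
  have "fst (X b - X a) = fst R + (b - a) * v + (b - a) * fst E"
    unfolding eq by (simp add: algebra_simps)
  moreover have "fst R \<ge> - ((b - a) * (2 * d))" using abs_fst_le[of R] R by linarith
  moreover have "(b - a) * fst E \<ge> - ((b - a) * d)"
  proof -
    have "fst E \<ge> - d" using abs_fst_le[of E] E by linarith
    then show ?thesis using ab by (metis minus_mult_right mult_left_mono diff_ge_0_iff_ge)
  qed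
  ultimately show "fst (X b - X a) \<ge> (b - a) * (v - 3 * d)" by (simp add: algebra_simps)
  have "norm (X b - X a) \<le> norm R + norm ((b - a) *\<^sub>R ((v, 0) + E))"
    unfolding eq by (rule norm_triangle_ineq)
  also have "norm ((b - a) *\<^sub>R ((v, 0) + E)) \<le> (b - a) * (v + d)"
  proof -
    have "norm ((v, 0) + E) \<le> norm ((v::real, 0::real)) + norm E" by (rule norm_triangle_ineq)
    then have "norm ((v, 0) + E) \<le> v + d" using E v by (simp add: norm_v0)
    then show ?thesis using ab by (simp add: mult_left_mono)
  qed
  finally show "norm (X b - X a) \<le> (b - a) * (v + 3 * d)" using R by (simp add: algebra_simps)
qed

lemma early_bound:
  fixes H z1 h tau d L B :: real
  assumes H0: "0 \<le> H" and H1: "H \<le> 1 / (4 * pi * tau)" and z: "\<bar>z1\<bar> \<le> L * d + 2 * B"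
    and h: "0 < h" "h \<le> 1" and d: "d \<ge> 1" and tau: "tau \<ge> d" and L: "L \<ge> 0" and B: "B \<ge> 0"
  shows "- H * (2 * z1 + h) / (4 * tau) \<le> (2 * L + 4 * B + 1) / (16 * pi * d)"
proof -
  define N where "N = L * d + 2 * B"
  have tpos: "tau > 0" using d tau by linarith
  have "- H * (2 * z1 + h) \<le> H * (2 * N + 1)"
  proof -
    have "- z1 \<le> N" using z unfolding N_def by linarith
    then have "- (2 * z1 + h) \<le> 2 * N + 1" using h by linarith
    then show ?thesis using H0 by (metis mult_left_mono mult_minus_right minus_mult_left)
  qed
  also have "\<dots> \<le> (1 / (4 * pi * tau)) * (2 * N + 1)"
    using H1 L B d unfolding N_def by (intro mult_right_mono) auto
  finally have "- H * (2 * z1 + h) / (4 * tau) \<le> ((1 / (4 * pi * tau)) * (2 * N + 1)) / (4 * tau)"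
    using tpos by (intro divide_right_mono) auto
  also have "\<dots> = (2 * N + 1) / (16 * pi * tau * tau)" using tpos by (simp add: field_simps)
  finally have 1: "- H * (2 * z1 + h) / (4 * tau) \<le> (2 * N + 1) / (16 * pi * tau * tau)" .
  have Npos: "2 * N + 1 \<ge> 0" using L B d unfolding N_def by simp
  have 2: "(2 * N + 1) / (16 * pi * tau * tau) \<le> (2 * N + 1) / (16 * pi * d * d)"
    using Npos d tau by (intro divide_left_mono mult_mono) auto
  have 3: "(2 * N + 1) / (16 * pi * d * d) \<le> (2 * L + 4 * B + 1) / (16 * pi * d)"
  proof -
    have "(2 * N + 1) / (16 * pi * d * d) = (2 * L + (4 * B + 1) / d) / (16 * pi * d)"
      using d unfolding N_def by (simp add: field_simps)
    also have "\<dots> \<le> (2 * L + 4 * B + 1) / (16 * pi * d)"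
    proof -
      have "(4 * B + 1) / d \<le> 4 * B + 1" using d B by (simp add: divide_le_eq)
      then show ?thesis using d by (intro divide_right_mono) auto
    qed
    finally show ?thesis .
  qed
  show ?thesis using 1 2 3 by linarith
qed

lemma mid_bound:
  fixes a H z1 h tau r v E :: real
  assumes a: "a > 0" and HE: "H \<ge> E / (4 * pi * tau)" and z: "2 * z1 + h \<ge> v * r"
    and r: "r > 0" "r \<le> tau" "tau \<le> 2 * r" and v: "v > 0" and E: "E > 0"
  shows "- a * H * (2 * z1 + h) / (4 * tau) \<le> - a * v * E / (64 * pi) * (1 / r)"
proof -
  have tpos: "tau > 0" using r by linarith
  have vr: "v * r > 0" using v r by simp
  have "E / (4 * pi * tau) > 0" using E tpos by simp
  then have H0: "H \<ge> 0" using HE by linarith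
  have "a * (E / (4 * pi * tau)) * (v * r) \<le> a * H * (2 * z1 + h)"
    using a HE z vr E tpos H0 by (intro mult_mono mult_left_mono) auto
  then have "a * (E / (4 * pi * tau)) * (v * r) / (4 * tau) \<le> a * H * (2 * z1 + h) / (4 * tau)"
    using tpos by (intro divide_right_mono) auto
  moreover have "a * v * E / (64 * pi) * (1 / r) \<le> a * (E / (4 * pi * tau)) * (v * r) / (4 * tau)"
  proof -
    have "a * (E / (4 * pi * tau)) * (v * r) / (4 * tau) = (a * v * E * r) / (16 * pi * (tau * tau))"
      by (simp add: field_simps)
    moreover have "tau * tau \<le> (2 * r) * (2 * r)" using r tpos by (intro mult_mono) auto
    then have "tau * tau \<le> 4 * (r * r)" by simp
    then have "(a * v * E * r) / (16 * pi * (4 * (r * r))) \<le> (a * v * E * r) / (16 * pi * (tau * tau))"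
      using a v E r tpos by (intro divide_left_mono mult_left_mono) auto
    moreover have "(a * v * E * r) / (16 * pi * (4 * (r * r))) = a * v * E / (64 * pi) * (1 / r)"
      using r by (simp add: field_simps)
    ultimately show ?thesis by simp
  qed
  ultimately show ?thesis by simp
qed

lemma heat_lower:
  fixes w :: "real \<times> real" and r tau L :: real
  assumes w: "norm w \<le> (L + 1) * r" and r: "0 < r" "r \<le> tau" "r \<le> 1" and L: "L \<ge> 0"
  shows "heat_kernel w tau \<ge> exp (- ((L + 1) ^ 2) / 4) / (4 * pi * tau)"
proof -
  have tpos: "tau > 0" using r by linarith
  have "(norm w)^2 \<le> ((L + 1) * r)^2" using w by (intro power_mono) auto
  also have "\<dots> = (L + 1)^2 * r * r" by (simp add: power2_eq_square)
  also have "\<dots> \<le> (L + 1)^2 * tau" 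
  proof -
    have "r * r \<le> tau * 1" using r by (intro mult_mono) auto
    then show ?thesis by (simp add: mult.assoc mult_left_mono)
  qed
  finally have "(norm w)^2 / (4 * tau) \<le> (L + 1)^2 / 4" using tpos by (simp add: field_simps)
  then have "exp (- ((L + 1) ^ 2) / 4) \<le> exp (- ((norm w)^2) / (4 * tau))" by simp
  then show ?thesis unfolding heat_kernel_def using tpos by (intro divide_right_mono) auto
qed

lemma heat_nonneg: "heat_kernel w tau \<ge> 0" if "tau \<ge> 0"
  using that unfolding heat_kernel_def by simp

lemma heat_upper: "heat_kernel w tau \<le> 1 / (4 * pi * tau)" if "tau > 0"
  using that unfolding heat_kernel_def by (intro divide_right_mono) auto

lemma log_integral:
  fixes t e :: real
  assumes e: "0 < e" "e < 1"
  shows "((\<lambda>s. 1 / (t - s)) has_integral ln (1 / e)) {t - 1..t - e}"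
proof -
  have "((\<lambda>s. 1 / (t - s)) has_integral ((- ln (t - (t - e))) - (- ln (t - (t - 1))))) {t - 1..t - e}"
  proof (rule fundamental_theorem_of_calculus[where f="\<lambda>s. - ln (t - s)"])
    show "t - 1 \<le> t - e" using e by simp
    fix s assume s: "s \<in> {t - 1..t - e}"
    then have "t - s > 0" using e by auto
    then have "((\<lambda>s. - ln (t - s)) has_real_derivative 1 / (t - s)) (at s within {t - 1..t - e})"
      by (auto intro!: derivative_eq_intros simp: field_simps)
    then show "((\<lambda>s. - ln (t - s)) has_vector_derivative 1 / (t - s)) (at s within {t - 1..t - e})"
      by (simp add: has_real_derivative_iff_has_vector_derivative)
  qed
  then show ?thesis using e by (simp add: ln_div)
qed

lemma alg1: "h > 0 \<Longrightarrow> (a::real) * (- H * (h * Z) / D) / h = - a * H * Z / D"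
  by (simp add: field_simps)

lemma fixed_t_bound:
  fixes X :: "real \<Rightarrow> real \<times> real"
  assumes a: "a > 0" and e: "0 < e" "e < 1" and v: "v > 0"
    and cont: "continuous_on {0..t} X"
    and T: "T \<ge> 1" and t: "t \<ge> T + 1"
    and fstlow: "\<And>s. T \<le> s \<Longrightarrow> s \<le> t \<Longrightarrow> fst (X t - X s) \<ge> (t - s) * (v / 2)"
    and normup: "\<And>s. T \<le> s \<Longrightarrow> s \<le> t \<Longrightarrow> norm (X t - X s) \<le> (t - s) * L"
    and early: "\<And>s. 0 \<le> s \<Longrightarrow> s \<le> T \<Longrightarrow> norm (X t - X s) \<le> L * (t - T) + 2 * B"
    and L: "L \<ge> 0" and B: "B \<ge> 0"
    and h: "0 < h" "h \<le> e"
  shows "(duhamel_c a e X (X t + (h, 0)) t - duhamel_c a e X (X t) t) / h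
     \<le> a * ((2 * L + 4 * B + 1) / (16 * pi * (t - T))) * T
        - a * v * exp (- ((L + 1) ^ 2) / 4) / (64 * pi) * ln (1 / e)"
proof -
  define x where "x = X t"
  define Kh where "Kh s = a * heat_kernel (x + (h, 0) - X s) (e + t - s)" for s
  define K0 where "K0 s = a * heat_kernel (x - X s) (e + t - s)" for s
  define q where "q s = (Kh s - K0 s) / h" for s
  define E where "E = exp (- ((L + 1) ^ 2) / 4)"
  define beta where "beta = (2 * L + 4 * B + 1) / (16 * pi * (t - T))"
  define c where "c = - a * v * E / (64 * pi)"
  have tpos: "t > 0" using T t by linarith
  have cKh: "continuous_on {0..t} Kh" unfolding Kh_def by (rule K_cont[OF e(1) cont])
  have cK0: "continuous_on {0..t} K0" unfolding K0_def by (rule K_cont[OF e(1) cont])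
  have cq: "continuous_on {0..t} q" unfolding q_def using h by (intro continuous_intros cKh cK0) auto
  have iq: "q integrable_on {c1..d1}" if "0 \<le> c1" "d1 \<le> t" for c1 d1
  proof (cases "c1 \<le> d1")
    case True
    then show ?thesis using that
      by (intro integrable_continuous_interval continuous_on_subset[OF cq]) auto
  next
    case False
    then show ?thesis by (simp add: integrable_on_empty)
  qed
  have quot: "(duhamel_c a e X (X t + (h, 0)) t - duhamel_c a e X (X t) t) / h = integral {0..t} q"
  proof -
    have "duhamel_c a e X (X t + (h, 0)) t = integral {0..t} Kh"
      unfolding Kh_def x_def by (rule duhamel_eq[OF e(1) tpos cont])
    moreover have "duhamel_c a e X (X t) t = integral {0..t} K0"
      unfolding K0_def x_def by (rule duhamel_eq[OF e(1) tpos cont])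
    moreover have "integral {0..t} q = (integral {0..t} Kh - integral {0..t} K0) / h"
      unfolding q_def using integral_diff[OF integrable_continuous_interval[OF cKh] integrable_continuous_interval[OF cK0]]
      by simp
    ultimately show ?thesis by simp
  qed
  have pw: "q s \<le> - a * heat_kernel ((x - X s) + (h, 0)) (e + t - s) * (2 * fst (x - X s) + h) / (4 * (e + t - s))"
    if "s \<le> t" for s
  proof -
    have tau: "e + t - s > 0" using that e by linarith
    have eq: "x + (h, 0) - X s = (x - X s) + (h, 0)" by (simp add: algebra_simps)
    have "Kh s - K0 s \<le> a * (- heat_kernel ((x - X s) + (h, 0)) (e + t - s) * (h * (2 * fst (x - X s) + h)) / (4 * (e + t - s)))"
      unfolding Kh_def K0_def eq right_diff_distrib[symmetric]
      using hk_diff[OF tau h(1), of "x - X s"] a by (intro mult_left_mono) auto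
    then have "(Kh s - K0 s) / h \<le> a * (- heat_kernel ((x - X s) + (h, 0)) (e + t - s) * (h * (2 * fst (x - X s) + h)) / (4 * (e + t - s))) / h"
      using h by (intro divide_right_mono) auto
    also have "\<dots> = - a * heat_kernel ((x - X s) + (h, 0)) (e + t - s) * (2 * fst (x - X s) + h) / (4 * (e + t - s))"
      by (rule alg1[OF h(1)])
    finally show ?thesis unfolding q_def .
  qed
  have p1: "q s \<le> a * beta" if "0 \<le> s" "s \<le> T" for s
  proof -
    define H where "H = heat_kernel ((x - X s) + (h, 0)) (e + t - s)"
    have tau: "e + t - s > 0" using that e t by linarith
    have "- H * (2 * fst (x - X s) + h) / (4 * (e + t - s)) \<le> (2 * L + 4 * B + 1) / (16 * pi * (t - T))"
    proof (rule early_bound)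
      show "0 \<le> H" unfolding H_def using tau by (intro heat_nonneg) auto
      show "H \<le> 1 / (4 * pi * (e + t - s))" unfolding H_def using tau by (rule heat_upper)
      show "\<bar>fst (x - X s)\<bar> \<le> L * (t - T) + 2 * B"
        using abs_fst_le[of "x - X s"] early[OF that] unfolding x_def by linarith
      show "0 < h" "h \<le> 1" using h e by auto
      show "t - T \<ge> 1" using t by simp
      show "e + t - s \<ge> t - T" using that e by simp
    qed (use L B in auto)
    then have "a * (- H * (2 * fst (x - X s) + h) / (4 * (e + t - s))) \<le> a * beta"
      unfolding beta_def using a by (intro mult_left_mono) auto
    then show ?thesis using pw[of s] that t unfolding H_def by (simp add: field_simps)
  qed
  have p2: "q s \<le> 0" if "T \<le> s" "s \<le> t" for s
  proof -
    have tau: "e + t - s > 0" using that e by linarith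
    have "(t - s) * (v / 2) \<ge> 0" using that v by simp
    then have "fst (x - X s) \<ge> 0" using fstlow[OF that] unfolding x_def by linarith
    moreover have "heat_kernel ((x - X s) + (h, 0)) (e + t - s) \<ge> 0" using tau by (intro heat_nonneg) auto
    ultimately have "- a * heat_kernel ((x - X s) + (h, 0)) (e + t - s) * (2 * fst (x - X s) + h) / (4 * (e + t - s)) \<le> 0"
      using a h tau by (intro divide_nonpos_pos mult_nonpos_nonneg) auto
    then show ?thesis using pw[of s] that by linarith
  qed
  have p3: "q s \<le> c * (1 / (t - s))" if "t - 1 \<le> s" "s \<le> t - e" for s
  proof -
    define r where "r = t - s"
    have r: "e \<le> r" "r \<le> 1" using that unfolding r_def by auto
    have rpos: "r > 0" using r e by linarith
    have sT: "T \<le> s" using that t by linarith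
    have st: "s \<le> t" using that e by linarith
    have tau_eq: "e + t - s = e + r" unfolding r_def by simp
    have nz: "norm (x - X s) \<le> L * r" using normup[OF sT st] unfolding x_def r_def by (simp add: mult.commute)
    have nw: "norm ((x - X s) + (h, 0)) \<le> (L + 1) * r"
    proof -
      have "norm ((x - X s) + (h, 0)) \<le> norm (x - X s) + norm (h, 0::real)" by (rule norm_triangle_ineq)
      also have "norm (h, 0::real) = h" using h by (simp add: norm_v0)
      finally show ?thesis using nz h r by (simp add: algebra_simps)
    qed
    have HE: "heat_kernel ((x - X s) + (h, 0)) (e + r) \<ge> E / (4 * pi * (e + r))"
      unfolding E_def using heat_lower[OF nw rpos _ r(2) L] e by simp
    have f: "fst (x - X s) \<ge> r * (v / 2)" using fstlow[OF sT st] unfolding x_def r_def .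
    have "r * (v / 2) * 2 = v * r" by simp
    then have z1: "2 * fst (x - X s) + h \<ge> v * r" using f h by linarith
    have "- a * heat_kernel ((x - X s) + (h, 0)) (e + r) * (2 * fst (x - X s) + h) / (4 * (e + r))
        \<le> - a * v * E / (64 * pi) * (1 / r)"
      by (rule mid_bound[OF a HE z1 rpos]) (use r e v in \<open>auto simp: E_def\<close>)
    then show ?thesis using pw[of s] st unfolding c_def r_def tau_eq[unfolded r_def] by simp
  qed
  have I1: "integral {0..T} q \<le> T * (a * beta)"
  proof -
    have "integral {0..T} q \<le> integral {0..T} (\<lambda>_. a * beta)"
      using p1 T t by (intro integral_le iq) auto
    also have "integral {0..T} (\<lambda>_. a * beta) = T * (a * beta)" using T by simp
    finally show ?thesis .
  qed
  have I2: "integral {T..t - 1} q \<le> 0"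
  proof -
    have "integral {T..t - 1} q \<le> integral {T..t - 1} (\<lambda>_. 0)"
      using p2 T t by (intro integral_le iq) auto
    then show ?thesis by simp
  qed
  have I3: "integral {t - 1..t - e} q \<le> c * ln (1 / e)"
  proof -
    have hi: "((\<lambda>s. c * (1 / (t - s))) has_integral c * ln (1 / e)) {t - 1..t - e}"
      by (rule has_integral_mult_right[OF log_integral[OF e]])
    have "integral {t - 1..t - e} q \<le> integral {t - 1..t - e} (\<lambda>s. c * (1 / (t - s)))"
      using p3 T t e by (intro integral_le iq has_integral_integrable[OF hi]) auto
    then show ?thesis using integral_unique[OF hi] by simp
  qed
  have I4: "integral {t - e..t} q \<le> 0"
  proof -
    have "integral {t - e..t} q \<le> integral {t - e..t} (\<lambda>_. 0)"
      using p2 T t e by (intro integral_le iq) auto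
    then show ?thesis by simp
  qed
  have split: "integral {0..t} q = integral {0..T} q + integral {T..t - 1} q + integral {t - 1..t - e} q + integral {t - e..t} q"
  proof -
    have "integral {0..t} q = integral {0..T} q + integral {T..t} q"
      using Henstock_Kurzweil_Integration.integral_combine[of 0 T t q] T t iq[of 0 t] by simp
    moreover have "integral {T..t} q = integral {T..t - 1} q + integral {t - 1..t} q"
      using Henstock_Kurzweil_Integration.integral_combine[of T "t - 1" t q] T t iq[of T t] by simp
    moreover have "integral {t - 1..t} q = integral {t - 1..t - e} q + integral {t - e..t} q"
      using Henstock_Kurzweil_Integration.integral_combine[of "t - 1" "t - e" t q] T t e iq[of "t - 1" t] by simp
    ultimately show ?thesis by simp
  qed
  have "integral {0..t} q \<le> T * (a * beta) + c * ln (1 / e)"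
    using split I1 I2 I3 I4 by linarith
  then show ?thesis unfolding quot beta_def c_def E_def by (simp add: algebra_simps)
qed

lemma key:
  fixes X :: "real \<Rightarrow> real \<times> real" and a u v e :: real
  assumes a: "a > 0" and e: "0 < e" "e < 1" and v: "v > 0"
    and cont: "continuous_on {0..} X"
    and ode: "\<And>t. t > 0 \<Longrightarrow> \<exists>g. ((\<lambda>x. duhamel_c a e X x t) has_derivative (\<lambda>h. g \<bullet> h)) (at (X t))
         \<and> (X has_vector_derivative (g + (u, 0))) (at t)"
    and lim: "((\<lambda>t. vector_derivative X (at t)) \<longlongrightarrow> (v, 0)) at_top"
  shows "v * (1 + a * exp (- ((v + 2) ^ 2) / 4) / (64 * pi) * ln (1 / e)) \<le> u"
proof -
  define X' where "X' t = vector_derivative X (at t)" for t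
  have der: "(X has_vector_derivative X' t) (at t)" if tp: "t > 0" for t
  proof -
    obtain g where "(X has_vector_derivative (g + (u, 0))) (at t)" using ode[OF tp] by blast
    moreover then have "X' t = g + (u, 0)" unfolding X'_def by (rule vector_derivative_at)
    ultimately show ?thesis by simp
  qed
  define d where "d = min (1/3) (v/6)"
  have d: "d > 0" "3 * d \<le> 1" "3 * d \<le> v / 2" using v unfolding d_def by auto
  have "eventually (\<lambda>t. dist (X' t) (v, 0) < d) at_top"
    using tendstoD[OF lim d(1)] unfolding X'_def .
  then obtain T0 where T0: "\<And>t. t \<ge> T0 \<Longrightarrow> dist (X' t) (v, 0) < d"
    unfolding eventually_at_top_linorder by blast
  define T where "T = max T0 1"
  have T1: "T \<ge> 1" unfolding T_def by simp
  have close: "norm (X' s - (v, 0)) \<le> d" if "s \<ge> T" for s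
    using T0[of s] that unfolding T_def by (simp add: dist_norm)
  have derT: "(X has_vector_derivative X' s) (at s)" if "s \<ge> T" for s
    using der[of s] that T1 by simp
  define L where "L = v + 1"
  have fstlow: "fst (X t - X s) \<ge> (t - s) * (v / 2)" if "T \<le> s" "s \<le> t" for s t
  proof -
    have "fst (X t - X s) \<ge> (t - s) * (v - 3 * d)"
      by (rule lin_bound(1)[OF derT close _ that]) (use v in auto)
    moreover have "(t - s) * (v - 3 * d) \<ge> (t - s) * (v / 2)"
      using that d by (intro mult_left_mono) auto
    ultimately show ?thesis by linarith
  qed
  have normup: "norm (X t - X s) \<le> (t - s) * L" if "T \<le> s" "s \<le> t" for s t
  proof -
    have "norm (X t - X s) \<le> (t - s) * (v + 3 * d)"
      by (rule lin_bound(2)[OF derT close _ that]) (use v in auto)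
    moreover have "(t - s) * (v + 3 * d) \<le> (t - s) * L"
      using that d unfolding L_def by (intro mult_left_mono) auto
    ultimately show ?thesis by linarith
  qed
  have "compact (X ` {0..T})"
    by (rule compact_continuous_image[OF continuous_on_subset[OF cont] compact_Icc]) auto
  then obtain B where B: "B > 0" "\<And>s. s \<in> {0..T} \<Longrightarrow> norm (X s) \<le> B"
    using compact_imp_bounded bounded_pos by (metis image_eqI)
  have early: "norm (X t - X s) \<le> L * (t - T) + 2 * B" if "t \<ge> T" "0 \<le> s" "s \<le> T" for s t
  proof -
    have "X t - X s = (X t - X T) + (X T - X s)" by simp
    then have "norm (X t - X s) \<le> norm (X t - X T) + norm (X T - X s)"
      by (metis norm_triangle_ineq)
    also have "norm (X T - X s) \<le> norm (X T) + norm (X s)" by (rule norm_triangle_ineq4)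
    also have "norm (X T) \<le> B" using B(2)[of T] T1 by simp
    also have "norm (X s) \<le> B" using B(2)[of s] that by simp
    also have "norm (X t - X T) \<le> (t - T) * L" using normup[of T t] that by simp
    finally show ?thesis by (simp add: mult.commute)
  qed
  define C where "C = a * ((2 * L + 4 * B + 1) / (16 * pi))"
  define Kc where "Kc = a * v * exp (- ((L + 1) ^ 2) / 4) / (64 * pi) * ln (1 / e)"
  have main: "fst (X' t) \<le> u + C * T * inverse (t - T) - Kc" if t: "t \<ge> T + 1" for t
  proof -
    have tpos: "t > 0" using t T1 by linarith
    obtain g where hd: "((\<lambda>x. duhamel_c a e X x t) has_derivative (\<lambda>h. g \<bullet> h)) (at (X t))"
      and hv: "(X has_vector_derivative (g + (u, 0))) (at t)" using ode[OF tpos] by blast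
    have X't: "X' t = g + (u, 0)" unfolding X'_def by (rule vector_derivative_at[OF hv])
    define F where "F h = duhamel_c a e X (X t + (h, 0)) t" for h
    have F0: "F 0 = duhamel_c a e X (X t) t" unfolding F_def by (simp add: zero_prod_def[symmetric])
    have lin: "((\<lambda>h::real. X t + (h, 0)) has_derivative (\<lambda>h. (h, 0))) (at 0)"
      by (auto intro!: derivative_eq_intros)
    have hd': "((\<lambda>x. duhamel_c a e X x t) has_derivative (\<lambda>h. g \<bullet> h)) (at (X t + (0, 0)))"
      using hd by (simp add: zero_prod_def[symmetric])
    have "(F has_derivative (\<lambda>h. g \<bullet> (h, 0))) (at 0)"
      unfolding F_def by (rule has_derivative_compose[OF lin hd'])
    moreover have "(\<lambda>h. g \<bullet> (h, 0)) = (\<lambda>h. fst g * h)"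
      by (cases g) (auto simp: inner_Pair)
    ultimately have "(F has_field_derivative fst g) (at 0)"
      unfolding has_field_derivative_def by simp
    then have "((\<lambda>y. (F y - F 0) / (y - 0)) \<longlongrightarrow> fst g) (at 0)"
      by (simp add: has_field_derivative_iff)
    then have lim00: "((\<lambda>y. (F y - F 0) / y) \<longlongrightarrow> fst g) (at 0)" by simp
    have "at_right (0::real) \<le> at 0" by (rule at_le) simp
    from tendsto_mono[OF this lim00] have lim0: "((\<lambda>y. (F y - F 0) / y) \<longlongrightarrow> fst g) (at_right 0)" .
    have ev: "eventually (\<lambda>y. (F y - F 0) / y \<le> a * ((2 * L + 4 * B + 1) / (16 * pi * (t - T))) * T - Kc) (at_right 0)"
      unfolding eventually_at_right_field
    proof (intro exI[of _ e] conjI allI impI)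
      show "e > 0" using e by simp
      fix y :: real assume y: "y > 0" "y < e"
      show "(F y - F 0) / y \<le> a * ((2 * L + 4 * B + 1) / (16 * pi * (t - T))) * T - Kc"
        unfolding F_def F0[unfolded F_def] Kc_def
        by (rule fixed_t_bound[OF a e v continuous_on_subset[OF cont] T1 t fstlow normup early])
           (use y T1 t B(1) v in \<open>auto simp: L_def\<close>)
    qed
    have "fst g \<le> a * ((2 * L + 4 * B + 1) / (16 * pi * (t - T))) * T - Kc"
      by (rule tendsto_upperbound[OF lim0 ev]) simp
    moreover have "a * ((2 * L + 4 * B + 1) / (16 * pi * (t - T))) * T = C * T * inverse (t - T)"
      unfolding C_def using t T1 by (simp add: field_simps)
    ultimately show ?thesis using X't by simp
  qed
  have l1: "((\<lambda>t. fst (X' t)) \<longlongrightarrow> v) at_top"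
    using tendsto_fst[OF lim] unfolding X'_def by simp
  have "filterlim (\<lambda>t. - T + t) at_top at_top"
    by (rule filterlim_tendsto_add_at_top[OF tendsto_const filterlim_ident])
  then have "((\<lambda>t. inverse (t - T)) \<longlongrightarrow> 0) at_top"
    using tendsto_inverse_0_at_top by (simp add: algebra_simps)
  then have "((\<lambda>t. u + C * T * inverse (t - T) - Kc) \<longlongrightarrow> u + C * T * 0 - Kc) at_top"
    by (intro tendsto_intros)
  then have l2: "((\<lambda>t. u + C * T * inverse (t - T) - Kc) \<longlongrightarrow> u - Kc) at_top" by simp
  have "v \<le> u - Kc"
  proof (rule tendsto_le[OF _ l2 l1])
    show "eventually (\<lambda>t. fst (X' t) \<le> u + C * T * inverse (t - T) - Kc) at_top"
      unfolding eventually_at_top_linorder using main by blast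
  qed simp
  moreover have "L + 1 = v + 2" unfolding L_def by simp
  ultimately show ?thesis unfolding Kc_def by (simp add: algebra_simps)
qed

lemma lim_aux:
  fixes k u :: real assumes k: "k > 0"
  shows "((\<lambda>e. u / (1 + k * ln (1 / e))) \<longlongrightarrow> 0) (at_right 0)"
proof -
  have "LIM e at_right 0. - ln (e::real) :> at_top"
    using ln_at_0 by (simp add: filterlim_uminus_at_top)
  then have "LIM e at_right 0. k * (- ln (e::real)) :> at_top"
    by (rule filterlim_tendsto_pos_mult_at_top[OF tendsto_const k])
  then have "LIM e at_right 0. 1 + k * (- ln (e::real)) :> at_top"
    by (rule filterlim_tendsto_add_at_top[OF tendsto_const])
  then have "LIM e at_right 0. 1 + k * ln (1 / e::real) :> at_top"
  proof (rule filterlim_cong[THEN iffD1, rotated 3])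
    show "\<forall>\<^sub>F x in at_right 0. 1 + k * - ln x = 1 + k * ln (1 / x)"
      unfolding eventually_at_right_field by (intro exI[of _ 1]) (auto simp: ln_div)
  qed auto
  then show ?thesis
    by (intro tendsto_divide_0[OF tendsto_const] filterlim_at_top_imp_at_infinity)
qed

theorem proposition4p2:
  fixes a u x0 y0 :: real
    and X :: "real \<Rightarrow> real \<Rightarrow> real \<times> real"
    and v :: "real \<Rightarrow> real"
  assumes a_pos: "a > 0" and u_pos: "u > 0"
    and init: "\<And>\<epsilon>. \<epsilon> \<in> {0<..<1} \<Longrightarrow> X \<epsilon> 0 = (x0, y0)"
    and cont: "\<And>\<epsilon>. \<epsilon> \<in> {0<..<1} \<Longrightarrow> continuous_on {0..} (X \<epsilon>)"
    and ode: "\<And>\<epsilon> t. \<epsilon> \<in> {0<..<1} \<Longrightarrow> t > 0 \<Longrightarrow>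
       \<exists>g. ((\<lambda>x. duhamel_c a \<epsilon> (X \<epsilon>) x t) has_derivative (\<lambda>h. g \<bullet> h)) (at (X \<epsilon> t))
         \<and> (X \<epsilon> has_vector_derivative (g + (u, 0))) (at t)"
    and mono: "\<And>\<epsilon>. \<epsilon> \<in> {0<..<1} \<Longrightarrow> \<exists>T>0. \<forall>s t. T \<le> s \<longrightarrow> s \<le> t \<longrightarrow>
       fst (vector_derivative (X \<epsilon>) (at t)) \<le> fst (vector_derivative (X \<epsilon>) (at s))"
    and v_pos: "\<And>\<epsilon>. \<epsilon> \<in> {0<..<1} \<Longrightarrow> v \<epsilon> > 0"
    and lim: "\<And>\<epsilon>. \<epsilon> \<in> {0<..<1} \<Longrightarrow>
       ((\<lambda>t. vector_derivative (X \<epsilon>) (at t)) \<longlongrightarrow> (v \<epsilon>, 0)) at_top"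
    and bdd: "\<exists>M. \<forall>\<epsilon>\<in>{0<..<1}. \<bar>v \<epsilon>\<bar> \<le> M"
  shows "(v \<longlongrightarrow> 0) (at_right 0)"
proof -
  obtain M where M: "\<And>\<epsilon>. \<epsilon> \<in> {0<..<1} \<Longrightarrow> \<bar>v \<epsilon>\<bar> \<le> M" using bdd by blast
  define k where "k = a * exp (- ((M + 2) ^ 2) / 4) / (64 * pi)"
  have k: "k > 0" unfolding k_def using a_pos by simp
  have bound: "v e \<le> u / (1 + k * ln (1 / e))" if e: "e \<in> {0<..<1}" for e
  proof -
    have ve: "v e > 0" using v_pos[OF e] .
    have vM: "v e \<le> M" using M[OF e] by simp
    have key1: "v e * (1 + a * exp (- ((v e + 2) ^ 2) / 4) / (64 * pi) * ln (1 / e)) \<le> u"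
      by (rule key[OF a_pos _ _ ve cont[OF e] ode[OF e] lim[OF e]]) (use e in auto)
    have lnpos: "ln (1 / e) > 0" using e by simp
    have "(v e + 2) ^ 2 \<le> (M + 2) ^ 2" using ve vM by (intro power_mono) auto
    then have "exp (- ((M + 2) ^ 2) / 4) \<le> exp (- ((v e + 2) ^ 2) / 4)" by simp
    then have "k \<le> a * exp (- ((v e + 2) ^ 2) / 4) / (64 * pi)"
      unfolding k_def using a_pos by (intro divide_right_mono mult_left_mono) auto
    then have "k * ln (1 / e) \<le> a * exp (- ((v e + 2) ^ 2) / 4) / (64 * pi) * ln (1 / e)"
      using lnpos by (intro mult_right_mono) auto
    then have "1 + k * ln (1 / e) \<le> 1 + a * exp (- ((v e + 2) ^ 2) / 4) / (64 * pi) * ln (1 / e)"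
      by linarith
    then have "v e * (1 + k * ln (1 / e)) \<le> u"
      using key1 ve by (meson mult_left_mono less_imp_le order_trans)
    moreover have "1 + k * ln (1 / e) > 0" using k lnpos by (simp add: add_pos_pos)
    ultimately show ?thesis by (simp add: le_divide_eq)
  qed
  have ev: "eventually (\<lambda>e. e \<in> {0<..<1}) (at_right (0::real))"
    unfolding eventually_at_right_field by (intro exI[of _ 1]) auto
  show ?thesis
  proof (rule tendsto_sandwich[OF _ _ tendsto_const lim_aux[OF k, of u]])
    show "eventually (\<lambda>e. 0 \<le> v e) (at_right 0)"
      using ev by eventually_elim (use v_pos in \<open>auto intro: less_imp_le\<close>)
    show "eventually (\<lambda>e. v e \<le> u / (1 + k * ln (1 / e))) (at_right 0)"
      using ev by eventually_elim (rule bound)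
  qed
qed

end
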